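(* Let $(X,u)$ be a Čech closure space and $Y$ a topological space, let $Y^X$ be the set of all continuous maps $(X,u)\to Y$, let $(f_\lambda)_{\lambda\in\Lambda}$ be a net in $Y^X$ and $f\in Y^X$. Then $(f_\lambda)$ converges continuously to $f$ if and only if $$\overline{\lim_{\Lambda}}\, f_\lambda^{-1}(B)\subset f^{-1}(B)\quad\text{for every closed subset } B\subset Y.$$
   Context: A Čech closure space $(X,u)$ is a set $X$ with an operator $u:\mathcal P(X)\to\mathcal P(X)$ satisfying $u(\emptyset)=\emptyset$, $A\subset u(A)$, and $u(A\cup B)=u(A)\cup u(B)$. The interior is $\mathrm{int}_u A=X\setminus u(X\setminus A)$; $U$ is a neighbourhood of $x$ if $x\in\mathrm{int}_uU$. A topological space is regarded as a closure space with its (Kuratowski) closure operator. A map $f:(X,u)\to(Y,v)$ is continuous if $f(u(A))\subset v(f(A))$ for all $A\subset X$. A net $(x_\mu)$ converges to $x$ if it is eventually in every neighbourhood of $x$. A net $(f_\lambda)_{\lambda\in\Lambda}$ in $Y^X$ converges continuously to $f\in Y^X$ if, whenever a net $(x_\mu)_{\mu\in M}$ converges to $x$ in $(X,u)$, the net $(f_\lambda(x_\mu))_{(\lambda,\mu)\in\Lambda\times M}$ (coordinatewise order) converges to $f(x)$ in $Y$. For a net $(A_\lambda)_{\lambda\in\Lambda}$ of subsets of $X$, its upper limit $\overline{\lim_{\Lambda}}A_\lambda$ is the set of all $x\in X$ such that for every $\lambda_0\in\Lambda$ and every neighbourhood $U$ of $x$ there is $\lambda\ge\lambda_0$ with $A_\lambda\cap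 U\ne\emptyset$. *)

theory Defs
  imports "HOL-Analysis.Analysis"
begin

definition closure_space :: "'a set \<Rightarrow> ('a set \<Rightarrow> 'a set) \<Rightarrow> bool" where
  "closure_space X u \<longleftrightarrow>
     u {} = {} \<and>
     (\<forall>A. A \<subseteq> X \<longrightarrow> A \<subseteq> u A \<and> u A \<subseteq> X) \<and>
     (\<forall>A B. A \<subseteq> X \<longrightarrow> B \<subseteq> X \<longrightarrow> u (A \<union> B) = u A \<union> u B)"

definition cl_interior :: "'a set \<Rightarrow> ('a set \<Rightarrow> 'a set) \<Rightarrow> 'a set \<Rightarrow> 'a set" where
  "cl_interior X u A = X - u (X - A)"

definition cl_nbhd :: "'a set \<Rightarrow> ('a set \<Rightarrow> 'a set) \<Rightarrow> 'a set \<Rightarrow> 'a \<Rightarrow> bool" where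
  "cl_nbhd X u U x \<longleftrightarrow> x \<in> cl_interior X u U"

definition cl_continuous :: "'a set \<Rightarrow> ('a set \<Rightarrow> 'a set) \<Rightarrow> 'b set \<Rightarrow> ('b set \<Rightarrow> 'b set)
    \<Rightarrow> ('a \<Rightarrow> 'b) \<Rightarrow> bool" where
  "cl_continuous X u Y v f \<longleftrightarrow> f ` X \<subseteq> Y \<and> (\<forall>A. A \<subseteq> X \<longrightarrow> f ` (u A) \<subseteq> v (f ` A))"

definition directed_set :: "'i set \<Rightarrow> ('i \<Rightarrow> 'i \<Rightarrow> bool) \<Rightarrow> bool" where
  "directed_set D le \<longleftrightarrow> D \<noteq> {} \<and>
     (\<forall>a\<in>D. le a a) \<and>
     (\<forall>a\<in>D. \<forall>b\<in>D. \<forall>c\<in>D. le a b \<longrightarrow> le b c \<longrightarrow> le a c) \<and>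
     (\<forall>a\<in>D. \<forall>b\<in>D. \<exists>c\<in>D. le a c \<and> le b c)"

definition net_converges :: "'a set \<Rightarrow> ('a set \<Rightarrow> 'a set) \<Rightarrow> 'i set \<Rightarrow> ('i \<Rightarrow> 'i \<Rightarrow> bool)
    \<Rightarrow> ('i \<Rightarrow> 'a) \<Rightarrow> 'a \<Rightarrow> bool" where
  "net_converges X u D le x x0 \<longleftrightarrow>
     (\<forall>U. cl_nbhd X u U x0 \<longrightarrow> (\<exists>i0\<in>D. \<forall>i\<in>D. le i0 i \<longrightarrow> x i \<in> U))"

definition prod_le :: "('i \<Rightarrow> 'i \<Rightarrow> bool) \<Rightarrow> ('j \<Rightarrow> 'j \<Rightarrow> bool) \<Rightarrow> 'i \<times> 'j \<Rightarrow> 'i \<times> 'j \<Rightarrow> bool" where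
  "prod_le le1 le2 p q \<longleftrightarrow> le1 (fst p) (fst q) \<and> le2 (snd p) (snd q)"

text \<open>The nets (x_mu) in X range over directed sets whose carrier lives in the type 'm
  (HOL cannot quantify over types inside a formula).\<close>
definition converges_continuously ::
  "'m itself \<Rightarrow> 'a set \<Rightarrow> ('a set \<Rightarrow> 'a set) \<Rightarrow> 'b topology \<Rightarrow> 'l set \<Rightarrow> ('l \<Rightarrow> 'l \<Rightarrow> bool)
     \<Rightarrow> ('l \<Rightarrow> 'a \<Rightarrow> 'b) \<Rightarrow> ('a \<Rightarrow> 'b) \<Rightarrow> bool" where
  "converges_continuously (_::'m itself) X u T L le F f \<longleftrightarrow>
     (\<forall>(M::'m set) leM x x0.
        directed_set M leM \<and> x ` M \<subseteq> X \<and> x0 \<in> X \<and> net_converges X u M leM x x0 \<longrightarrow>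
        net_converges (topspace T) ((closure_of) T) (L \<times> M) (prod_le le leM)
          (\<lambda>(l, m). F l (x m)) (f x0))"

definition upper_limit :: "'a set \<Rightarrow> ('a set \<Rightarrow> 'a set) \<Rightarrow> 'l set \<Rightarrow> ('l \<Rightarrow> 'l \<Rightarrow> bool)
    \<Rightarrow> ('l \<Rightarrow> 'a set) \<Rightarrow> 'a set" where
  "upper_limit X u L le A = {x \<in> X. \<forall>l0\<in>L. \<forall>U. cl_nbhd X u U x \<longrightarrow>
       (\<exists>l\<in>L. le l0 l \<and> A l \<inter> U \<noteq> {})}"

end

theory Submission
  imports Defs
begin

lemma nbhd_Int:
  assumes "closure_space X u" "cl_nbhd X u U x" "cl_nbhd X u V x"
  shows "cl_nbhd X u (U \<inter> V) x"
proof -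
  have e: "X - (U \<inter> V) = (X - U) \<union> (X - V)" by blast
  have "u (X - (U \<inter> V)) = u (X - U) \<union> u (X - V)"
  proof -
    have "\<forall>A B. A \<subseteq> X \<longrightarrow> B \<subseteq> X \<longrightarrow> u (A \<union> B) = u A \<union> u B"
      using assms(1) unfolding closure_space_def by (elim conjE)
    then show ?thesis unfolding e by (metis Diff_subset)
  qed
  then show ?thesis using assms(2,3) unfolding cl_nbhd_def cl_interior_def by auto
qed

lemma nbhd_X:
  assumes "closure_space X u" "x \<in> X"
  shows "cl_nbhd X u X x"
  using assms unfolding cl_nbhd_def cl_interior_def closure_space_def by auto

lemma top_nbhd:
  assumes "closedin T B" "y \<in> topspace T" "y \<notin> B"
  shows "cl_nbhd (topspace T) ((closure_of) T) (topspace T - B) y"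
proof -
  have "topspace T - (topspace T - B) = B" using closedin_subset[OF assms(1)] by blast
  then show ?thesis using assms closure_of_closedin[OF assms(1)]
    unfolding cl_nbhd_def cl_interior_def by auto
qed

lemma neg_ex: "\<not> (\<exists>i0\<in>A. \<forall>i\<in>A. R i0 i \<longrightarrow> P i) \<Longrightarrow> a \<in> A \<Longrightarrow> \<exists>i\<in>A. R a i \<and> \<not> P i"
  by blast

theorem corollary1:
  fixes X :: "'a set" and u :: "'a set \<Rightarrow> 'a set" and T :: "'b topology"
    and L :: "'l set" and le :: "'l \<Rightarrow> 'l \<Rightarrow> bool"
    and F :: "'l \<Rightarrow> 'a \<Rightarrow> 'b" and f :: "'a \<Rightarrow> 'b"
  assumes "closure_space X u"
    and "directed_set L le"
    and "\<forall>l\<in>L. cl_continuous X u (topspace T) ((closure_of) T) (F l)"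
    and "cl_continuous X u (topspace T) ((closure_of) T) f"
  shows "(converges_continuously TYPE('l \<times> 'a set) X u T L le F f \<longleftrightarrow>
           (\<forall>B. closedin T B \<longrightarrow>
              upper_limit X u L le (\<lambda>l. {x \<in> X. F l x \<in> B}) \<subseteq> {x \<in> X. f x \<in> B}))
       \<and> ((\<forall>B. closedin T B \<longrightarrow>
              upper_limit X u L le (\<lambda>l. {x \<in> X. F l x \<in> B}) \<subseteq> {x \<in> X. f x \<in> B})
           \<longrightarrow> converges_continuously TYPE('m) X u T L le F f)"
proof -
  have cs: "closure_space X u" by fact
  have dL: "directed_set L le" by fact
  have Ftop: "\<And>l y. l \<in> L \<Longrightarrow> y \<in> X \<Longrightarrow> F l y \<in> topspace T"
    using assms(3) unfolding cl_continuous_def by blast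
  have ftop: "\<And>y. y \<in> X \<Longrightarrow> f y \<in> topspace T"
    using assms(4) unfolding cl_continuous_def by blast
  have Ltrans: "\<And>a b c. a \<in> L \<Longrightarrow> b \<in> L \<Longrightarrow> c \<in> L \<Longrightarrow> le a b \<Longrightarrow> le b c \<Longrightarrow> le a c"
    using dL unfolding directed_set_def by blast
  have Ldir: "\<And>a b. a \<in> L \<Longrightarrow> b \<in> L \<Longrightarrow> \<exists>c\<in>L. le a c \<and> le b c"
    using dL unfolding directed_set_def by blast
  have Lne: "L \<noteq> {}" using dL unfolding directed_set_def by blast
  have Lrefl: "\<And>a. a \<in> L \<Longrightarrow> le a a" using dL unfolding directed_set_def by blast
  let ?C = "\<forall>B. closedin T B \<longrightarrow>
              upper_limit X u L le (\<lambda>l. {x \<in> X. F l x \<in> B}) \<subseteq> {x \<in> X. f x \<in> B}"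
  have dir1: "converges_continuously TYPE('l \<times> 'a set) X u T L le F f \<Longrightarrow> ?C"
  proof (intro allI impI subsetI)
    fix B x
    assume cc: "converges_continuously TYPE('l \<times> 'a set) X u T L le F f"
      and Bc: "closedin T B" and xin: "x \<in> upper_limit X u L le (\<lambda>l. {x \<in> X. F l x \<in> B})"
    have xX: "x \<in> X" using xin unfolding upper_limit_def by blast
    have ul: "\<And>l0 U. l0 \<in> L \<Longrightarrow> cl_nbhd X u U x \<Longrightarrow>
        \<exists>l\<in>L. le l0 l \<and> {x \<in> X. F l x \<in> B} \<inter> U \<noteq> {}"
      using xin unfolding upper_limit_def by blast
    show "x \<in> {x \<in> X. f x \<in> B}"
    proof (rule ccontr)
      assume "x \<notin> {x \<in> X. f x \<in> B}"
      then have fxB: "f x \<notin> B" using xX by blast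
      define M :: "('l \<times> 'a set) set" where "M = {p. fst p \<in> L \<and> cl_nbhd X u (snd p) x}"
      define leM :: "'l \<times> 'a set \<Rightarrow> 'l \<times> 'a set \<Rightarrow> bool"
        where "leM p q \<longleftrightarrow> le (fst p) (fst q) \<and> snd q \<subseteq> snd p" for p q
      have "\<forall>p\<in>M. \<exists>q. fst q \<in> L \<and> le (fst p) (fst q) \<and> snd q \<in> snd p \<and> snd q \<in> X
               \<and> F (fst q) (snd q) \<in> B"
      proof
        fix p assume "p \<in> M"
        then obtain l where "l \<in> L" "le (fst p) l" "{x \<in> X. F l x \<in> B} \<inter> snd p \<noteq> {}"
          using ul unfolding M_def by blast
        then show "\<exists>q. fst q \<in> L \<and> le (fst p) (fst q) \<and> snd q \<in> snd p \<and> snd q \<in> X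
               \<and> F (fst q) (snd q) \<in> B" by fastforce
      qed
      then obtain g where g: "\<forall>p\<in>M. fst (g p) \<in> L \<and> le (fst p) (fst (g p)) \<and> snd (g p) \<in> snd p
          \<and> snd (g p) \<in> X \<and> F (fst (g p)) (snd (g p)) \<in> B"
        by (metis (no_types, lifting) bchoice)
      define y where "y p = snd (g p)" for p
      have dM: "directed_set M leM"
        unfolding directed_set_def
      proof (intro conjI ballI impI)
        obtain l where "l \<in> L" using Lne by blast
        then have "(l, X) \<in> M" unfolding M_def using nbhd_X[OF cs xX] by simp
        then show "M \<noteq> {}" by blast
      next
        fix a assume "a \<in> M" then show "leM a a" unfolding M_def leM_def using Lrefl by auto
      next
        fix a b c assume "a \<in> M" "b \<in> M" "c \<in> M" "leM a b" "leM b c"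
        then show "leM a c" unfolding M_def leM_def using Ltrans by blast
      next
        fix a b assume ab: "a \<in> M" "b \<in> M"
        then obtain c where c: "c \<in> L" "le (fst a) c" "le (fst b) c"
          using Ldir unfolding M_def by blast
        have "(c, snd a \<inter> snd b) \<in> M" using ab c nbhd_Int[OF cs] unfolding M_def by auto
        then show "\<exists>c\<in>M. leM a c \<and> leM b c" using c unfolding leM_def by (intro bexI) auto
      qed
      have yX: "y ` M \<subseteq> X" using g unfolding y_def by blast
      have ny: "net_converges X u M leM y x"
        unfolding net_converges_def
      proof (intro allI impI)
        fix U assume U: "cl_nbhd X u U x"
        obtain l where "l \<in> L" using Lne by blast
        then have "(l, U) \<in> M" unfolding M_def using U by simp
        moreover have "\<forall>i\<in>M. leM (l, U) i \<longrightarrow> y i \<in> U"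
          using g unfolding y_def leM_def by auto
        ultimately show "\<exists>i0\<in>M. \<forall>i\<in>M. leM i0 i \<longrightarrow> y i \<in> U" by blast
      qed
      have conv: "net_converges (topspace T) ((closure_of) T) (L \<times> M) (prod_le le leM)
          (\<lambda>(l, m). F l (y m)) (f x)"
        using cc dM yX xX ny unfolding converges_continuously_def by blast
      obtain i0 where i0: "i0 \<in> L \<times> M"
        and ev: "\<forall>i\<in>L \<times> M. prod_le le leM i0 i \<longrightarrow> (\<lambda>(l, m). F l (y m)) i \<in> topspace T - B"
        using conv top_nbhd[OF Bc ftop[OF xX] fxB] unfolding net_converges_def by blast
      obtain l1 m1 where i0e: "i0 = (l1, m1)" by (cases i0)
      have l1: "l1 \<in> L" and m1: "m1 \<in> M" using i0 i0e by auto
      then have "fst m1 \<in> L" unfolding M_def by simp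
      then obtain c where c: "c \<in> L" "le l1 c" "le (fst m1) c" using Ldir l1 by blast
      define mu where "mu = (c, snd m1)"
      have mu: "mu \<in> M" using m1 c unfolding M_def mu_def by simp
      have lemu: "leM m1 mu" unfolding leM_def mu_def using c by simp
      define l where "l = fst (g mu)"
      have lL: "l \<in> L" and lc: "le c l" and FB: "F l (y mu) \<in> B"
        using g mu unfolding l_def y_def mu_def by auto
      have "le l1 l" using Ltrans[OF l1 c(1) lL c(2) lc] .
      then have "prod_le le leM i0 (l, mu)" unfolding prod_le_def i0e using lemu by simp
      then have "F l (y mu) \<in> topspace T - B" using ev lL mu by auto
      then show False using FB by blast
    qed
  qed
  have dir2: "converges_continuously TYPE('n) X u T L le F f" if C: ?C for n :: "'n itself"
    unfolding converges_continuously_def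
  proof (intro allI impI, elim conjE)
    fix M :: "'n set" and leM x x0
    assume dM: "directed_set M leM" and xM: "x ` M \<subseteq> X" and x0X: "x0 \<in> X"
      and nc: "net_converges X u M leM x x0"
    show "net_converges (topspace T) ((closure_of) T) (L \<times> M) (prod_le le leM)
          (\<lambda>(l, m). F l (x m)) (f x0)"
      unfolding net_converges_def
    proof (intro allI impI, rule ccontr)
      fix W assume W: "cl_nbhd (topspace T) ((closure_of) T) W (f x0)"
      assume neg: "\<not> (\<exists>i0\<in>L \<times> M. \<forall>i\<in>L \<times> M. prod_le le leM i0 i \<longrightarrow>
                   (\<lambda>(l, m). F l (x m)) i \<in> W)"
      define B where "B = T closure_of (topspace T - W)"
      have Bc: "closedin T B" unfolding B_def by simp
      have fB: "f x0 \<notin> B" using W unfolding B_def cl_nbhd_def cl_interior_def by blast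
      have sub: "topspace T - W \<subseteq> B" unfolding B_def by (rule closure_of_subset) blast
      have "x0 \<in> upper_limit X u L le (\<lambda>l. {x \<in> X. F l x \<in> B})"
        unfolding upper_limit_def
      proof (intro CollectI conjI ballI allI impI x0X)
        fix l0 U assume l0: "l0 \<in> L" and U: "cl_nbhd X u U x0"
        obtain m1 where m1: "m1 \<in> M" and mU: "\<forall>i\<in>M. leM m1 i \<longrightarrow> x i \<in> U"
          using nc U unfolding net_converges_def by blast
        have "(l0, m1) \<in> L \<times> M" using l0 m1 by simp
        then obtain i where i: "i \<in> L \<times> M" "prod_le le leM (l0, m1) i"
          and ni: "(\<lambda>(l, m). F l (x m)) i \<notin> W"
          using neg_ex[OF neg \<open>(l0, m1) \<in> L \<times> M\<close>] by blast
        obtain l m where ie: "i = (l, m)" by (cases i)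
        have lm: "l \<in> L" "m \<in> M" "prod_le le leM (l0, m1) (l, m)" using i ie by auto
        have nW: "F l (x m) \<notin> W" using ni ie by simp
        have "x m \<in> U" using mU lm unfolding prod_le_def by simp
        moreover have "x m \<in> X" using xM lm by blast
        moreover have "F l (x m) \<in> B" using sub nW Ftop[OF lm(1) \<open>x m \<in> X\<close>] by blast
        ultimately show "\<exists>l\<in>L. le l0 l \<and> {x \<in> X. F l x \<in> B} \<inter> U \<noteq> {}"
          using lm unfolding prod_le_def by auto
      qed
      then show False using C Bc fB by blast
    qed
  qed
  show ?thesis
  proof (intro conjI impI iffI)
    show "converges_continuously TYPE('l \<times> 'a set) X u T L le F f \<Longrightarrow> ?C" by (rule dir1)
    show "?C \<Longrightarrow> converges_continuously TYPE('l \<times> 'a set) X u T L le F f" by (rule dir2)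
    show "?C \<Longrightarrow> converges_continuously TYPE('m) X u T L le F f" by (rule dir2)
  qed
qed

end
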